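(* Let $N\ge 2$, $\Omega>0$ and $F=2\Omega\,\mathrm i\,T^N_{10}$. Let $W\in C^1([0,\infty),\mathfrak{su}(N))$ be a solution of \[\dot W=[\Delta_N^{-1}(W-F),W]_N .\] Then $\widetilde W(t):=\exp\!\left(-\tfrac12 N^{3/2}F t\right)W(t)\exp\!\left(\tfrac12 N^{3/2}F t\right)$ is a solution of \[\dot{\widetilde W}=[\Delta_N^{-1}\widetilde W,\widetilde W]_N,\qquad \widetilde W(0)=W(0).\]
   Context: $\mathfrak{su}(N)$ is the Lie algebra of traceless skew-Hermitian $N\times N$ complex matrices; $\exp$ is the matrix exponential. The bracket is $[A,B]_N=N^{3/2}(AB-BA)$. Let $s=(N-1)/2$ and index rows and columns by $m_1,m_2\in\{-s,-s+1,\dots,s\}$. For $l=1,\dots,N-1$ and $m=-l,\dots,l$ define $(T^N_{lm})_{m_1m_2}=(-1)^{s-m_1}\sqrt{2l+1}\begin{pmatrix} s & l & s\\ -m_1 & m & m_2\end{pmatrix}$ (Wigner 3j-symbol); these form an orthonormal basis of $\mathfrak{sl}(N,\mathbb C)$ for the Frobenius inner product. $\Delta_N^{-1}$ is the complex-linear map on $\mathfrak{sl}(N,\mathbb C)$ defined by $\Delta_N^{-1}T^N_{lm}=-\frac{1}{l(l+1)}T^N_{lm}$. *)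

theory Defs
  imports "HOL-Analysis.Analysis" "Jordan_Normal_Form.Matrix"
begin

definition hf :: "int \<Rightarrow> real" where
  "hf x = fact (nat (x div 2))"

text \<open>Wigner 3j-symbol via the Racah formula. All six arguments are DOUBLED:
  w3j a1 a2 a3 b1 b2 b3 is the symbol with j_i = a_i/2 and m_i = b_i/2.
  It is zero unless the selection rules hold.\<close>
definition w3j :: "int \<Rightarrow> int \<Rightarrow> int \<Rightarrow> int \<Rightarrow> int \<Rightarrow> int \<Rightarrow> real" where
  "w3j j1 j2 j3 m1 m2 m3 =
    (if 0 \<le> j1 \<and> 0 \<le> j2 \<and> 0 \<le> j3 \<and> m1 + m2 + m3 = 0
        \<and> \<bar>m1\<bar> \<le> j1 \<and> \<bar>m2\<bar> \<le> j2 \<and> \<bar>m3\<bar> \<le> j3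
        \<and> even (j1 + m1) \<and> even (j2 + m2) \<and> even (j3 + m3)
        \<and> j3 \<le> j1 + j2 \<and> j1 \<le> j2 + j3 \<and> j2 \<le> j1 + j3 \<and> even (j1 + j2 + j3)
     then (-1) powi ((j1 - j2 - m3) div 2)
        * sqrt (hf (j1 + j2 - j3) * hf (j1 - j2 + j3) * hf (- j1 + j2 + j3) / hf (j1 + j2 + j3 + 2))
        * sqrt (hf (j1 - m1) * hf (j1 + m1) * hf (j2 - m2) * hf (j2 + m2) * hf (j3 - m3) * hf (j3 + m3))
        * (\<Sum>k\<in>{k::int. 0 \<le> k \<and> 0 \<le> j3 - j2 + 2*k + m1 \<and> 0 \<le> j3 - j1 + 2*k - m2
                  \<and> 0 \<le> j1 + j2 - j3 - 2*k \<and> 0 \<le> j1 - 2*k - m1 \<and> 0 \<le> j2 - 2*k + m2}.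
             (-1) powi k / (fact (nat k) * hf (j3 - j2 + 2*k + m1) * hf (j3 - j1 + 2*k - m2)
                 * hf (j1 + j2 - j3 - 2*k) * hf (j1 - 2*k - m1) * hf (j2 - 2*k + m2)))
     else 0)"

text \<open>The matrices T^N_{lm}. Row/column index i \<in> {0..N-1} corresponds to
  m_1 = i - s, s = (N-1)/2 (increasing order). In doubled units 2 s = N-1,
  2 m_1 = 2 i - (N-1), and s - m_1 = N - 1 - i.\<close>
definition Tmat :: "nat \<Rightarrow> nat \<Rightarrow> int \<Rightarrow> complex mat" where
  "Tmat N l m = mat N N (\<lambda>(i, j). complex_of_real
      ((-1) ^ (N - 1 - i) * sqrt (2 * real l + 1)
       * w3j (int N - 1) (2 * int l) (int N - 1)
             (int N - 1 - 2 * int i) (2 * m) (2 * int j - (int N - 1))))"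

definition ctrans :: "complex mat \<Rightarrow> complex mat" where
  "ctrans A = mat (dim_col A) (dim_row A) (\<lambda>(i, j). cnj (A $$ (j, i)))"

definition mtrace :: "complex mat \<Rightarrow> complex" where
  "mtrace A = (\<Sum>i<dim_row A. A $$ (i, i))"

definition frob :: "complex mat \<Rightarrow> complex mat \<Rightarrow> complex" where
  "frob A B = mtrace (ctrans A * B)"

definition su :: "nat \<Rightarrow> complex mat set" where
  "su N = {A. A \<in> carrier_mat N N \<and> ctrans A = - A \<and> mtrace A = 0}"

definition brk :: "nat \<Rightarrow> complex mat \<Rightarrow> complex mat \<Rightarrow> complex mat" where
  "brk N A B = complex_of_real (real N powr (3/2)) \<cdot>\<^sub>m (A * B - B * A)"

text \<open>Delta_N^{-1}: the complex-linear map with Delta_N^{-1} T_{lm} = -T_{lm}/(l(l+1)),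
  written out (entrywise) in the orthonormal basis T_{lm} of sl(N,C): coefficient of A is frob T_{lm} A.\<close>
definition lapinv :: "nat \<Rightarrow> complex mat \<Rightarrow> complex mat" where
  "lapinv N A = mat N N (\<lambda>(i, j). \<Sum>l\<in>{1..N-1}. \<Sum>m\<in>{-int l..int l}.
      (- complex_of_real (1 / (real l * (real l + 1))) * frob (Tmat N l m) A) * Tmat N l m $$ (i, j))"

definition mexp :: "nat \<Rightarrow> complex mat \<Rightarrow> complex mat" where
  "mexp N A = mat N N (\<lambda>(i, j). (\<Sum>k. (A ^\<^sub>m k) $$ (i, j) / of_nat (fact k)))"

definition C1_solution :: "nat \<Rightarrow> (complex mat \<Rightarrow> complex mat) \<Rightarrow> (real \<Rightarrow> complex mat) \<Rightarrow> bool" where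
  "C1_solution N rhs W \<longleftrightarrow>
     (\<forall>t\<ge>0. W t \<in> su N) \<and>
     (\<exists>W'. (\<forall>t\<ge>0. W' t \<in> carrier_mat N N) \<and>
       (\<forall>i<N. \<forall>j<N. \<forall>t\<ge>0.
          ((\<lambda>s. W s $$ (i, j)) has_vector_derivative (W' t $$ (i, j))) (at t within {0..})) \<and>
       (\<forall>i<N. \<forall>j<N. continuous_on {0..} (\<lambda>t. W' t $$ (i, j))) \<and>
       (\<forall>t\<ge>0. W' t = rhs (W t)))"

end

theory Submission
  imports Defs
begin


lemma vand: "(\<Sum>i\<le>n. (i choose a) * ((n - i) choose b)) = Suc n choose (a + b + 1)"
proof (induction n arbitrary: b)
  case 0
  then show ?case by (cases a; cases b; simp)
next
  case (Suc n)
  note IH = Suc.IH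
  show ?case
  proof (cases b)
    case 0
    have "(\<Sum>i\<le>Suc n. (i choose a) * ((Suc n - i) choose b)) = (\<Sum>i\<le>Suc n. i choose a)"
      using 0 by simp
    also have "\<dots> = Suc (Suc n) choose Suc a" by (rule sum_choose_upper)
    finally show ?thesis using 0 by simp
  next
    case (Suc c)
    have "(\<Sum>i\<le>Suc n. (i choose a) * ((Suc n - i) choose b))
        = (\<Sum>i\<le>n. (i choose a) * ((Suc n - i) choose b))" using Suc by simp
    also have "\<dots> = (\<Sum>i\<le>n. (i choose a) * ((n - i) choose b) + (i choose a) * ((n - i) choose c))"
      by (rule sum.cong) (auto simp: Suc Suc_diff_le algebra_simps)
    also have "\<dots> = (Suc n choose (a + b + 1)) + (Suc n choose (a + c + 1))"
      by (simp add: sum.distrib IH)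
    also have "\<dots> = Suc (Suc n) choose (a + b + 1)" using Suc by simp
    finally show ?thesis .
  qed
qed

lemma choose_absorb_aux: "i * (i choose k) = Suc k * (i choose Suc k) + k * (i choose k)"
proof (cases "k \<le> i")
  case True
  have "(i - k) * (i choose k) = Suc k * (i choose Suc k)"
  proof (cases i)
    case 0 then show ?thesis using True by simp
  next
    case (Suc m)
    then show ?thesis using binomial_absorb_comp[of "Suc m" k] Suc_times_binomial[of k m] by simp
  qed
  then show ?thesis using True by (metis add_mult_distrib le_add_diff_inverse2)
next
  case False
  then have z1: "i choose k = 0" and z2: "i choose Suc k = 0" by (auto simp: binomial_eq_0)
  show ?thesis unfolding z1 z2 by simp
qed

definition Qp :: "nat \<Rightarrow> nat \<Rightarrow> nat \<Rightarrow> int" where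
  "Qp n l i = (\<Sum>k\<le>l. (-1)^k * int (l choose k) * int (i choose k) * int ((n - i) choose (l - k)))"

lemma inner_sum:
  assumes "k \<le> l"
  shows "(\<Sum>i\<le>n. int (i choose k) * int ((n - i) choose (l - k)) * (2 * int i - int n))
     = 2 * (int (Suc k) * int (Suc n choose (l + 2)) + int k * int (Suc n choose (l + 1)))
       - int n * int (Suc n choose (l + 1))"
proof -
  have e1: "(\<Sum>i\<le>n. (i choose k) * ((n - i) choose (l - k))) = Suc n choose (l + 1)"
    using vand[where n=n and a=k and b="l - k"] assms by simp
  have e2: "(\<Sum>i\<le>n. (i choose Suc k) * ((n - i) choose (l - k))) = Suc n choose (l + 2)"
    using vand[where n=n and a="Suc k" and b="l - k"] assms by simp
  have e3: "(\<Sum>i\<le>n. i * (i choose k) * ((n - i) choose (l - k)))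
      = Suc k * (Suc n choose (l + 2)) + k * (Suc n choose (l + 1))"
  proof -
    have "(\<Sum>i\<le>n. i * (i choose k) * ((n - i) choose (l - k)))
      = (\<Sum>i\<le>n. Suc k * ((i choose Suc k) * ((n - i) choose (l - k))) + k * ((i choose k) * ((n - i) choose (l - k))))"
      by (rule sum.cong) (auto simp: choose_absorb_aux algebra_simps)
    also have "\<dots> = Suc k * (Suc n choose (l + 2)) + k * (Suc n choose (l + 1))"
      by (simp add: sum.distrib sum_distrib_left[symmetric] e1 e2)
    finally show ?thesis .
  qed
  have "(\<Sum>i\<le>n. int (i choose k) * int ((n - i) choose (l - k)) * (2 * int i - int n))
      = 2 * int (\<Sum>i\<le>n. i * (i choose k) * ((n - i) choose (l - k)))
        - int n * int (\<Sum>i\<le>n. (i choose k) * ((n - i) choose (l - k)))"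
    by (simp add: of_nat_sum sum_distrib_left sum_subtractf[symmetric] algebra_simps)
  also have "\<dots> = 2 * (int (Suc k) * int (Suc n choose (l + 2)) + int k * int (Suc n choose (l + 1)))
       - int n * int (Suc n choose (l + 1))" unfolding e1 e3 by (simp only: of_nat_add of_nat_mult)
  finally show ?thesis .
qed

lemma Qp_orth:
  assumes "2 \<le> l"
  shows "(\<Sum>i\<le>n. Qp n l i * (2 * int i - int n)) = 0"
proof -
  define A where "A = int (Suc n choose (l + 2))"
  define B where "B = int (Suc n choose (l + 1))"
  have "(\<Sum>i\<le>n. Qp n l i * (2 * int i - int n))
     = (\<Sum>k\<le>l. (-1)^k * int (l choose k) *
          (\<Sum>i\<le>n. int (i choose k) * int ((n - i) choose (l - k)) * (2 * int i - int n)))"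
    unfolding Qp_def by (simp add: sum_distrib_left sum_distrib_right sum.swap[of _ "{..n}"] algebra_simps)
  also have "\<dots> = (\<Sum>k\<le>l. (-1)^k * int (l choose k) * (2 * (int (Suc k) * A + int k * B) - int n * B))"
    by (rule sum.cong) (auto simp: inner_sum A_def B_def)
  also have "\<dots> = (2 * A - int n * B) * (\<Sum>k\<le>l. (-1)^k * int (l choose k))
       + (2 * A + 2 * B) * (\<Sum>k\<le>l. (-1)^k * int k * int (l choose k))"
    by (simp add: sum_distrib_left sum.distrib[symmetric] algebra_simps)
  also have "\<dots> = 0"
  proof -
    have h1: "(\<Sum>k\<le>l. (-1)^k * int (l choose k)) = 0"
      by (rule choose_alternating_sum) (use assms in simp)
    have h2: "(\<Sum>k\<le>l. (-1)^k * int k * int (l choose k)) = 0"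
      by (rule choose_alternating_linear_sum) (use assms in simp)
    show ?thesis by (simp only: h1 h2) simp?
  qed
  finally show ?thesis .
qed

lemma sq_sum: "3 * (\<Sum>i\<le>n. (2 * int i - int n)^2) = int n * (int n + 1) * (int n + 2)"
proof -
  define S where "S = (\<Sum>i\<le>n. (2 * int i - int n)^2)"
  define A where "A = (\<Sum>i\<le>n. int i ^ 2)"
  define B where "B = (\<Sum>i\<le>n. int i)"
  have e1: "S = 4 * A - 4 * int n * B + (int n + 1) * int n ^ 2"
    unfolding S_def A_def B_def
    by (simp add: power2_eq_square sum_subtractf sum.distrib sum_distrib_left sum_distrib_right algebra_simps)
  have e2: "6 * A = int n * (int n + 1) * (2 * int n + 1)"
    unfolding A_def by (induction n) (auto simp: power2_eq_square algebra_simps)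
  have e3: "2 * B = int n * (int n + 1)"
    unfolding B_def by (induction n) (auto simp: algebra_simps)
  have "3 * S = 2 * (6 * A) - 6 * int n * (2 * B) + 3 * (int n + 1) * int n ^ 2"
    unfolding e1 by (simp add: algebra_simps)
  also have "\<dots> = 2 * (int n * (int n + 1) * (2 * int n + 1)) - 6 * int n * (int n * (int n + 1)) + 3 * (int n + 1) * int n ^ 2"
    unfolding e2 e3 ..
  also have "\<dots> = int n * (int n + 1) * (int n + 2)"
    by (simp add: power2_eq_square algebra_simps)
  finally show ?thesis unfolding S_def .
qed



lemma hf2: "hf (2 * x) = fact (nat x)"
  unfolding hf_def by simp

lemma powi_m1: "((-1::real) powi z) = (if even z then 1 else -1)"
proof (cases "z \<ge> 0")
  case True
  then obtain n where "z = int n" by (metis nonneg_eq_int)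
  then show ?thesis by (auto simp: even_nat_iff)
next
  case False
  then obtain n where n: "z = - int n" by (metis nonpos_int_cases linear)
  then show ?thesis by (auto simp: power_int_minus even_nat_iff)
qed

lemma Tsupp:
  assumes "i < N" "j < N" "Tmat N l m $$ (i, j) \<noteq> 0"
  shows "int j = int i - m"
  using assms unfolding Tmat_def w3j_def by (auto split: if_splits)

lemma w3j_diag:
  fixes n l i :: nat
  assumes "l \<le> n" "i \<le> n"
    and j1: "j1 = int n" and j2: "j2 = 2 * int l" and j3: "j3 = int n"
    and m1: "m1 = int n - 2 * int i" and m2: "m2 = 0" and m3: "m3 = 2 * int i - int n"
  shows "w3j j1 j2 j3 m1 m2 m3 = (-1) powi (int n - int l - int i)
     * sqrt (fact l * fact (n - l) * fact l / fact (n + l + 1)) * real_of_int (Qp n l i)"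
proof -
  have cond: "0 \<le> j1 \<and> 0 \<le> j2 \<and> 0 \<le> j3 \<and> m1 + m2 + m3 = 0
        \<and> \<bar>m1\<bar> \<le> j1 \<and> \<bar>m2\<bar> \<le> j2 \<and> \<bar>m3\<bar> \<le> j3
        \<and> even (j1 + m1) \<and> even (j2 + m2) \<and> even (j3 + m3)
        \<and> j3 \<le> j1 + j2 \<and> j1 \<le> j2 + j3 \<and> j2 \<le> j1 + j3 \<and> even (j1 + j2 + j3)"
    using assms by auto
  have s1: "(j1 - j2 - m3) div 2 = int n - int l - int i" using assms by simp
  have a1: "j1 + j2 - j3 = 2 * int l" "j1 - j2 + j3 = 2 * int (n - l)" "- j1 + j2 + j3 = 2 * int l"
    "j1 + j2 + j3 + 2 = 2 * int (n + l + 1)"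
    using assms by auto
  have a2: "j1 - m1 = 2 * int i" "j1 + m1 = 2 * int (n - i)" "j2 - m2 = 2 * int l" "j2 + m2 = 2 * int l"
     "j3 - m3 = 2 * int (n - i)" "j3 + m3 = 2 * int i"
    using assms by auto
  have sq: "sqrt (hf (j1 - m1) * hf (j1 + m1) * hf (j2 - m2) * hf (j2 + m2) * hf (j3 - m3) * hf (j3 + m3))
     = fact i * fact (n - i) * fact l"
  proof -
    have "hf (j1 - m1) * hf (j1 + m1) * hf (j2 - m2) * hf (j2 + m2) * hf (j3 - m3) * hf (j3 + m3)
       = (fact i * fact (n - i) * fact l)^2"
      unfolding a2 hf2 by (simp add: power2_eq_square algebra_simps)
    then show ?thesis by simp
  qed
  define K where "K = {k::int. 0 \<le> k \<and> 0 \<le> j3 - j2 + 2*k + m1 \<and> 0 \<le> j3 - j1 + 2*k - m2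
                  \<and> 0 \<le> j1 + j2 - j3 - 2*k \<and> 0 \<le> j1 - 2*k - m1 \<and> 0 \<le> j2 - 2*k + m2}"
  define K' where "K' = {k::nat. k \<le> l \<and> k \<le> i \<and> l + i \<le> n + k}"
  have KK: "K = int ` K'"
  proof (intro equalityI subsetI)
    fix k assume "k \<in> K"
    then have "k \<ge> 0" "k \<le> int l" "k \<le> int i" "int l + int i \<le> int n + k"
      unfolding K_def using assms by auto
    then show "k \<in> int ` K'" unfolding K'_def
      by (intro image_eqI[of _ _ "nat k"]) auto
  next
    fix k assume "k \<in> int ` K'"
    then show "k \<in> K" unfolding K_def K'_def using assms by auto
  qed
  define tm where "tm = (\<lambda>k::int. (-1) powi k / (fact (nat k) * hf (j3 - j2 + 2*k + m1) * hf (j3 - j1 + 2*k - m2)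
                 * hf (j1 + j2 - j3 - 2*k) * hf (j1 - 2*k - m1) * hf (j2 - 2*k + m2)))"
  have tK: "tm (int k) = (-1)^k / (fact k * fact (n + k - (l + i)) * fact k * fact (l - k) * fact (i - k) * fact (l - k))"
    if "k \<in> K'" for k
  proof -
    have b: "j3 - j2 + 2 * int k + m1 = 2 * int (n + k - (l + i))" "j3 - j1 + 2 * int k - m2 = 2 * int k"
      "j1 + j2 - j3 - 2 * int k = 2 * int (l - k)" "j1 - 2 * int k - m1 = 2 * int (i - k)"
      "j2 - 2 * int k + m2 = 2 * int (l - k)"
      using assms that unfolding K'_def by auto
    show ?thesis unfolding tm_def by (simp only: b hf2 nat_int power_int_of_nat)
  qed
  have tK2: "fact i * fact (n - i) * fact l * tm (int k) = (-1)^k * real (l choose k) * real (i choose k) * real ((n - i) choose (l - k))"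
    if "k \<in> K'" for k
  proof -
    have k: "k \<le> l" "k \<le> i" "l - k \<le> n - i" "n - i - (l - k) = n + k - (l + i)"
      using that unfolding K'_def by auto
    show ?thesis unfolding tK[OF that] using k
      by (simp add: binomial_fact field_simps)
  qed
  have Ssum: "fact i * fact (n - i) * fact l * sum tm K = real_of_int (Qp n l i)"
  proof -
    have "fact i * fact (n - i) * fact l * sum tm K = (\<Sum>k\<in>K'. fact i * fact (n - i) * fact l * tm (int k))"
      unfolding KK by (simp add: sum.reindex sum_distrib_left)
    also have "\<dots> = (\<Sum>k\<in>K'. (-1)^k * real (l choose k) * real (i choose k) * real ((n - i) choose (l - k)))"
      by (rule sum.cong) (auto simp: tK2)
    also have "\<dots> = (\<Sum>k\<le>l. (-1)^k * real (l choose k) * real (i choose k) * real ((n - i) choose (l - k)))"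
    proof (rule sum.mono_neutral_left)
      show "\<forall>k\<in>{..l} - K'. (-1)^k * real (l choose k) * real (i choose k) * real ((n - i) choose (l - k)) = 0"
      proof
        fix k assume "k \<in> {..l} - K'"
        then have "i < k \<or> n - i < l - k" unfolding K'_def using assms(2) by auto
        then show "(-1)^k * real (l choose k) * real (i choose k) * real ((n - i) choose (l - k)) = 0"
          by (auto simp: binomial_eq_0)
      qed
    qed (auto simp: K'_def)
    also have "\<dots> = real_of_int (Qp n l i)" unfolding Qp_def by simp
    finally show ?thesis .
  qed
  have "w3j j1 j2 j3 m1 m2 m3 = (-1) powi ((j1 - j2 - m3) div 2)
        * sqrt (hf (j1 + j2 - j3) * hf (j1 - j2 + j3) * hf (- j1 + j2 + j3) / hf (j1 + j2 + j3 + 2))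
        * sqrt (hf (j1 - m1) * hf (j1 + m1) * hf (j2 - m2) * hf (j2 + m2) * hf (j3 - m3) * hf (j3 + m3))
        * sum tm K"
    unfolding w3j_def K_def tm_def by (rule if_P[OF cond])
  also have "\<dots> = (-1) powi (int n - int l - int i)
        * sqrt (fact l * fact (n - l) * fact l / fact (n + l + 1))
        * (fact i * fact (n - i) * fact l) * sum tm K"
    by (simp only: s1 a1 hf2 sq nat_int)
  finally have "w3j j1 j2 j3 m1 m2 m3 = (-1) powi (int n - int l - int i)
        * sqrt (fact l * fact (n - l) * fact l / fact (n + l + 1))
        * (fact i * fact (n - i) * fact l) * sum tm K" .
  then show ?thesis using Ssum by (simp add: algebra_simps)
qed



definition cT :: "nat \<Rightarrow> nat \<Rightarrow> real" where
  "cT N l = (-1)^l * sqrt (2 * real l + 1) * sqrt (fact l * fact (N - 1 - l) * fact l / fact (N - 1 + l + 1))"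

lemma sign_lemma:
  assumes "i \<le> n"
  shows "(-1::real)^(n - i) * (-1) powi (int n - int l - int i) = (-1)^l"
proof -
  have e: "even (int n - int l - int i) \<longleftrightarrow> (even (n - i) \<longleftrightarrow> even l)"
    using assms by presburger
  show ?thesis unfolding powi_m1 minus_one_power_iff using e by auto
qed

lemma Tdiag:
  assumes "1 \<le> l" "l \<le> N - 1" "i < N"
  shows "Tmat N l 0 $$ (i, i) = complex_of_real (cT N l * real_of_int (Qp (N - 1) l i))"
proof -
  have N: "int N - 1 = int (N - 1)" using assms by auto
  have w: "w3j (int N - 1) (2 * int l) (int N - 1) (int N - 1 - 2 * int i) (2 * 0) (2 * int i - (int N - 1))
    = (-1) powi (int (N - 1) - int l - int i)
     * sqrt (fact l * fact (N - 1 - l) * fact l / fact (N - 1 + l + 1)) * real_of_int (Qp (N - 1) l i)"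
    by (rule w3j_diag) (use assms in \<open>auto simp: of_nat_diff\<close>)
  have "Tmat N l 0 $$ (i, i) = complex_of_real ((-1) ^ (N - 1 - i) * sqrt (2 * real l + 1) *
     w3j (int N - 1) (2 * int l) (int N - 1) (int N - 1 - 2 * int i) (2 * 0) (2 * int i - (int N - 1)))"
    unfolding Tmat_def index_mat(1)[OF assms(3) assms(3)] prod.case ..
  also have "\<dots> = complex_of_real (((-1) ^ (N - 1 - i) * (-1) powi (int (N - 1) - int l - int i)) * ((-1)^l * sqrt (2 * real l + 1) *
     sqrt (fact l * fact (N - 1 - l) * fact l / fact (N - 1 + l + 1)))* real_of_int (Qp (N - 1) l i) * (-1)^l)"
    unfolding w by (simp only: mult_ac) (simp add: power_mult_distrib[symmetric])
  also have "\<dots> = complex_of_real (cT N l * real_of_int (Qp (N - 1) l i))"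
  proof -
    have sg: "(-1::real) ^ (N - 1 - i) * (-1) powi (int (N - 1) - int l - int i) = (-1)^l"
      by (rule sign_lemma) (use assms in auto)
    have l2: "(-1::real)^l * (-1)^l = 1" by (simp add: power_mult_distrib[symmetric])
    show ?thesis unfolding sg cT_def
      by (simp only: mult_ac l2) (simp add: mult.assoc[symmetric] l2)
  qed
  finally show ?thesis .
qed

definition kap :: "nat \<Rightarrow> real" where
  "kap N = sqrt 3 * sqrt (fact (N - 2) / fact (N + 1))"

lemma Qp1: "Qp n 1 i = int n - 2 * int i" if "i \<le> n"
  using that unfolding Qp_def by (simp add: atMost_Suc)

lemma T10diag:
  assumes "2 \<le> N" "i < N"
  shows "Tmat N 1 0 $$ (i, i) = complex_of_real (kap N * (2 * real i - real (N - 1)))"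
proof -
  have "Tmat N 1 0 $$ (i, i) = complex_of_real (cT N 1 * real_of_int (Qp (N - 1) 1 i))"
    by (rule Tdiag) (use assms in auto)
  also have "\<dots> = complex_of_real (kap N * (2 * real i - real (N - 1)))"
  proof -
    have q: "Qp (N - 1) 1 i = int (N - 1) - 2 * int i" by (rule Qp1) (use assms in auto)
    have e: "N - 1 - 1 = N - 2" "N - 1 + 1 + 1 = N + 1" using assms by auto
    have r: "real_of_int (int (N - 1) - 2 * int i) = - (2 * real i - real (N - 1))" by simp
    have "cT N 1 * real_of_int (Qp (N - 1) 1 i) = kap N * (2 * real i - real (N - 1))"
      unfolding q cT_def kap_def e by (simp add: algebra_simps)
    then show ?thesis by simp
  qed
  finally show ?thesis .
qed

lemma T10_off:
  assumes "i < N" "j < N" "i \<noteq> j"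
  shows "Tmat N 1 0 $$ (i, j) = 0"
  using Tsupp[of i N j 1 0] assms by auto

lemma frob_eq:
  assumes "A \<in> carrier_mat N N" "B \<in> carrier_mat N N"
  shows "frob A B = (\<Sum>i<N. \<Sum>p<N. cnj (A $$ (p, i)) * B $$ (p, i))"
  using assms unfolding frob_def mtrace_def ctrans_def
  by (simp add: scalar_prod_def atLeast0LessThan)

lemma Tmat_carrier[simp]: "Tmat N l m \<in> carrier_mat N N"
  unfolding Tmat_def by simp

lemma Tmat_real: "i < N \<Longrightarrow> j < N \<Longrightarrow> cnj (Tmat N l m $$ (i, j)) = Tmat N l m $$ (i, j)"
  unfolding Tmat_def by simp

lemma frob_T10_diag:
  assumes "2 \<le> N"
  shows "frob (Tmat N l m) (Tmat N 1 0) = (\<Sum>i<N. Tmat N l m $$ (i, i) * Tmat N 1 0 $$ (i, i))"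
proof -
  have "frob (Tmat N l m) (Tmat N 1 0) = (\<Sum>i<N. \<Sum>p<N. cnj (Tmat N l m $$ (p, i)) * Tmat N 1 0 $$ (p, i))"
    by (rule frob_eq) auto
  also have "\<dots> = (\<Sum>i<N. \<Sum>p<N. if p = i then Tmat N l m $$ (i, i) * Tmat N 1 0 $$ (i, i) else 0)"
    by (intro sum.cong refl) (auto simp: T10_off[simplified] Tmat_real)
  also have "\<dots> = (\<Sum>i<N. Tmat N l m $$ (i, i) * Tmat N 1 0 $$ (i, i))"
    by simp
  finally show ?thesis .
qed

lemma fact_shift: "2 \<le> N \<Longrightarrow> fact (N + 1) = real (N + 1) * real N * real (N - 1) * fact (N - 2)"
proof -
  assume "2 \<le> N"
  then obtain m where m: "N = Suc (Suc m)" by (metis add_2_eq_Suc le_Suc_ex)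
  show ?thesis unfolding m by (simp add: algebra_simps)
qed

lemma frob_T_T10:
  assumes "2 \<le> N" "1 \<le> l" "l \<le> N - 1"
  shows "frob (Tmat N l m) (Tmat N 1 0) = (if l = 1 \<and> m = 0 then 1 else 0)"
proof (cases "m = 0")
  case False
  have "Tmat N l m $$ (i, i) = 0" if "i < N" for i
    using Tsupp[of i N i l m] that False by auto
  then show ?thesis unfolding frob_T10_diag[OF assms(1)] using False by simp
next
  case True
  define n where "n = N - 1"
  have N: "N = Suc n" using assms unfolding n_def by auto
  have "frob (Tmat N l m) (Tmat N 1 0)
     = (\<Sum>i<N. complex_of_real (cT N l * real_of_int (Qp n l i)) * complex_of_real (kap N * (2 * real i - real n)))"
    unfolding frob_T10_diag[OF assms(1)] True
  proof (intro sum.cong refl)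
    fix i assume i: "i \<in> {..<N}"
    have a: "Tmat N l 0 $$ (i, i) = complex_of_real (cT N l * real_of_int (Qp (N - 1) l i))"
      by (rule Tdiag) (use assms i in auto)
    have b: "Tmat N 1 0 $$ (i, i) = complex_of_real (kap N * (2 * real i - real (N - 1)))"
      by (rule T10diag) (use assms i in auto)
    show "Tmat N l 0 $$ (i, i) * Tmat N 1 0 $$ (i, i) = complex_of_real (cT N l * real_of_int (Qp n l i)) * complex_of_real (kap N * (2 * real i - real n))"
      unfolding a b n_def ..
  qed
  also have "\<dots> = complex_of_real (cT N l * kap N * real_of_int (\<Sum>i\<le>n. Qp n l i * (2 * int i - int n)))"
    by (simp add: N lessThan_Suc_atMost sum_distrib_left algebra_simps)
  finally have fr: "frob (Tmat N l m) (Tmat N 1 0) = complex_of_real (cT N l * kap N * real_of_int (\<Sum>i\<le>n. Qp n l i * (2 * int i - int n)))" .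
  show ?thesis
  proof (cases "l = 1")
    case False
    then have "2 \<le> l" using assms by auto
    then show ?thesis unfolding fr using Qp_orth False by simp
  next
    case l1: True
    have q: "(\<Sum>i\<le>n. Qp n 1 i * (2 * int i - int n)) = - (\<Sum>i\<le>n. (2 * int i - int n)^2)"
    proof -
      have "(\<Sum>i\<le>n. Qp n 1 i * (2 * int i - int n)) = (\<Sum>i\<le>n. - ((2 * int i - int n)^2))"
      proof (rule sum.cong)
        fix i assume "i \<in> {..n}"
        then have qq: "Qp n 1 i = int n - 2 * int i" by (intro Qp1) auto
        show "Qp n 1 i * (2 * int i - int n) = - ((2 * int i - int n)^2)"
          unfolding qq by (simp add: power2_eq_square algebra_simps)
      qed simp
      then show ?thesis by (simp add: sum_negf)
    qed
    have s: "real_of_int (\<Sum>i\<le>n. (2 * int i - int n)^2) = real n * (real n + 1) * (real n + 2) / 3"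
      using arg_cong[OF sq_sum[of n], of real_of_int] by simp
    have ck: "cT N 1 * kap N = - (3 * (fact (N - 2) / fact (N + 1)))"
    proof -
      have e: "N - 1 - 1 = N - 2" "N - 1 + 1 + 1 = N + 1" using assms by auto
      define x where "x = fact (N - 2) / (fact (N + 1) :: real)"
      have x: "x \<ge> 0" unfolding x_def by simp
      have c1: "cT N 1 = - (sqrt 3 * sqrt x)" unfolding cT_def e x_def by simp
      have c2: "kap N = sqrt 3 * sqrt x" unfolding kap_def x_def ..
      have "cT N 1 * kap N = - ((sqrt 3 * sqrt 3) * (sqrt x * sqrt x))"
        unfolding c1 c2 by (simp only: mult_ac minus_mult_left)
      also have "\<dots> = - (3 * x)" using x by simp
      finally show ?thesis unfolding x_def .
    qed
    have fs: "fact (N + 1) = real n * (real n + 1) * (real n + 2) * (fact (N - 2) :: real)"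
      using fact_shift[OF assms(1)] unfolding N by (simp add: algebra_simps)
    have pos: "(fact (N - 2) :: real) > 0" "real n > 0" using assms N by auto
    have "cT N 1 * kap N * real_of_int (\<Sum>i\<le>n. Qp n 1 i * (2 * int i - int n))
        = 3 * (fact (N - 2) / fact (N + 1)) * (real n * (real n + 1) * (real n + 2) / 3)"
      unfolding q ck of_int_minus s by simp
    also have "\<dots> = 1"
    proof -
      define P where "P = real n * (real n + 1) * (real n + 2)"
      have P: "P > 0" unfolding P_def using pos by simp
      show ?thesis unfolding fs P_def[symmetric] using P pos by (simp add: field_simps)
    qed
    finally have "cT N 1 * kap N * real_of_int (\<Sum>i\<le>n. Qp n 1 i * (2 * int i - int n)) = 1" .
    then show ?thesis using fr l1 True by simp
  qed
qed



definition diagm :: "nat \<Rightarrow> (nat \<Rightarrow> complex) \<Rightarrow> complex mat" where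
  "diagm N d = mat N N (\<lambda>(i, j). if i = j then d i else 0)"

definition cj :: "nat \<Rightarrow> (nat \<Rightarrow> complex) \<Rightarrow> (nat \<Rightarrow> complex) \<Rightarrow> complex mat \<Rightarrow> complex mat" where
  "cj N v u A = mat N N (\<lambda>(i, j). v i * A $$ (i, j) * u j)"

lemma diagm_carrier[simp]: "diagm N d \<in> carrier_mat N N" unfolding diagm_def by simp
lemma cj_carrier[simp]: "cj N v u A \<in> carrier_mat N N" unfolding cj_def by simp
lemma diagm_index[simp]: "i < N \<Longrightarrow> j < N \<Longrightarrow> diagm N d $$ (i, j) = (if i = j then d i else 0)"
  unfolding diagm_def by simp
lemma cj_index[simp]: "i < N \<Longrightarrow> j < N \<Longrightarrow> cj N v u A $$ (i, j) = v i * A $$ (i, j) * u j"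
  unfolding cj_def by simp
lemma diagm_dims[simp]: "dim_row (diagm N d) = N" "dim_col (diagm N d) = N"
  unfolding diagm_def by simp_all
lemma cj_dims[simp]: "dim_row (cj N v u A) = N" "dim_col (cj N v u A) = N"
  unfolding cj_def by simp_all

lemma sum_delta_left: "i < N \<Longrightarrow> (\<Sum>p\<in>{0..<N}. (if i = p then a p else 0) * f p) = a i * f (i::nat)" for f a :: "nat \<Rightarrow> complex"
proof -
  assume i: "i < N"
  have "(\<Sum>p\<in>{0..<N}. (if i = p then a p else 0) * f p) = (\<Sum>p\<in>{0..<N}. if i = p then a i * f i else 0)"
    by (rule sum.cong) auto
  also have "\<dots> = a i * f i" using i by simp
  finally show ?thesis .
qed
lemma sum_delta_right: "j < N \<Longrightarrow> (\<Sum>p\<in>{0..<N}. f p * (if p = j then a p else 0)) = f j * a (j::nat)" for f a :: "nat \<Rightarrow> complex"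
proof -
  assume j: "j < N"
  have "(\<Sum>p\<in>{0..<N}. f p * (if p = j then a p else 0)) = (\<Sum>p\<in>{0..<N}. if p = j then f j * a j else 0)"
    by (rule sum.cong) auto
  also have "\<dots> = f j * a j" using j by simp
  finally show ?thesis .
qed
lemma Tmat_dims[simp]: "dim_row (Tmat N l m) = N" "dim_col (Tmat N l m) = N"
  unfolding Tmat_def by simp_all

lemma diagm_pow: "diagm N d ^\<^sub>m k = diagm N (\<lambda>i. d i ^ k)"
proof (induction k)
  case 0
  show ?case by (rule eq_matI) auto
next
  case (Suc k)
  show ?case unfolding pow_mat.simps Suc
    by (rule eq_matI) (auto simp: scalar_prod_def sum_delta_left)
qed

lemma exp_sum_complex: "(\<Sum>k. x ^ k / fact k) = exp (x :: complex)"
proof -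
  have "(\<lambda>k. x ^ k / fact k) = (\<lambda>k. x ^ k /\<^sub>R fact k)"
    by (rule ext) (simp add: scaleR_conv_of_real divide_inverse mult.commute)
  then show ?thesis using exp_converges[of x] sums_unique by metis
qed

lemma mexp_diagm: "mexp N (diagm N d) = diagm N (\<lambda>i. exp (d i))"
  unfolding mexp_def diagm_pow
  by (rule eq_matI) (auto simp: exp_sum_complex)

lemma diag_cj:
  assumes "A \<in> carrier_mat N N"
  shows "diagm N v * A * diagm N u = cj N v u A"
proof (rule eq_matI)
  fix i j assume ij: "i < dim_row (cj N v u A)" "j < dim_col (cj N v u A)"
  have "(diagm N v * A) $$ (i, p) = v i * A $$ (i, p)" if "p < N" for p
    using ij that assms by (simp add: scalar_prod_def sum_delta_left)
  then show "(diagm N v * A * diagm N u) $$ (i, j) = cj N v u A $$ (i, j)"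
    using ij assms by (simp add: scalar_prod_def sum_delta_right)
qed (use assms in auto)

lemma smult_T10_diagm:
  assumes "2 \<le> N"
  shows "complex_of_real r \<cdot>\<^sub>m (c \<cdot>\<^sub>m Tmat N 1 0) = diagm N (\<lambda>i. complex_of_real r * (c * Tmat N 1 0 $$ (i, i)))"
  by (rule eq_matI) (auto simp: T10_off[simplified])

lemma cj_mult:
  assumes "X \<in> carrier_mat N N" "Y \<in> carrier_mat N N" "\<And>i. i < N \<Longrightarrow> u i * v i = 1"
  shows "cj N v u (X * Y) = cj N v u X * cj N v u Y"
proof (rule eq_matI)
  fix i j assume ij: "i < dim_row (cj N v u X * cj N v u Y)" "j < dim_col (cj N v u X * cj N v u Y)"
  have "(\<Sum>p\<in>{0..<N}. v i * X $$ (i, p) * u p * (v p * Y $$ (p, j) * u j))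
      = (\<Sum>p\<in>{0..<N}. v i * (X $$ (i, p) * Y $$ (p, j)) * u j)"
    by (rule sum.cong) (auto simp: assms(3)[symmetric] algebra_simps)
  then show "cj N v u (X * Y) $$ (i, j) = (cj N v u X * cj N v u Y) $$ (i, j)"
    using ij assms by (simp add: scalar_prod_def sum_distrib_left sum_distrib_right)
qed auto

lemma cj_minus:
  assumes "X \<in> carrier_mat N N" "Y \<in> carrier_mat N N"
  shows "cj N v u (X - Y) = cj N v u X - cj N v u Y"
  by (rule eq_matI) (use assms in \<open>auto simp: algebra_simps\<close>)

lemma cj_smult:
  assumes "X \<in> carrier_mat N N"
  shows "cj N v u (a \<cdot>\<^sub>m X) = a \<cdot>\<^sub>m cj N v u X"
  by (rule eq_matI) (use assms in \<open>auto simp: algebra_simps\<close>)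

lemma brk_carrier[simp]: "X \<in> carrier_mat N N \<Longrightarrow> Y \<in> carrier_mat N N \<Longrightarrow> brk N X Y \<in> carrier_mat N N"
  unfolding brk_def by auto

lemma cj_brk:
  assumes "X \<in> carrier_mat N N" "Y \<in> carrier_mat N N" "\<And>i. i < N \<Longrightarrow> u i * v i = 1"
  shows "cj N v u (brk N X Y) = brk N (cj N v u X) (cj N v u Y)"
proof -
  have c: "X * Y \<in> carrier_mat N N" "Y * X \<in> carrier_mat N N" "X * Y - Y * X \<in> carrier_mat N N"
    using assms by auto
  show ?thesis unfolding brk_def cj_smult[OF c(3)] cj_minus[OF c(1,2)]
    by (simp add: cj_mult[OF assms(1,2,3)] cj_mult[OF assms(2,1,3)])
qed

lemma lapinv_dims[simp]: "dim_row (lapinv N X) = N" "dim_col (lapinv N X) = N"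
  unfolding lapinv_def by simp_all

lemma lapinv_carrier[simp]: "lapinv N X \<in> carrier_mat N N"
  unfolding lapinv_def by simp

lemma frob_cj_T:
  assumes X: "X \<in> carrier_mat N N" and ij: "i < N" "j < N"
    and vu: "\<And>p q i j. p < N \<Longrightarrow> q < N \<Longrightarrow> i < N \<Longrightarrow> j < N \<Longrightarrow> int q - int p = int j - int i \<Longrightarrow> v p * u q = v i * u j"
  shows "frob (Tmat N l m) (cj N v u X) * Tmat N l m $$ (i, j) = frob (Tmat N l m) X * Tmat N l m $$ (i, j) * (v i * u j)"
proof (cases "Tmat N l m $$ (i, j) = 0")
  case True
  then show ?thesis by simp
next
  case False
  have sij: "int j = int i - m" using Tsupp[OF ij False] .
  have "frob (Tmat N l m) (cj N v u X) = (\<Sum>a<N. \<Sum>p<N. cnj (Tmat N l m $$ (p, a)) * (v p * X $$ (p, a) * u a))"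
    by (subst frob_eq[of _ N]) auto
  also have "\<dots> = (\<Sum>a<N. \<Sum>p<N. cnj (Tmat N l m $$ (p, a)) * X $$ (p, a) * (v i * u j))"
  proof (intro sum.cong refl)
    fix a p assume ap: "a \<in> {..<N}" "p \<in> {..<N}"
    show "cnj (Tmat N l m $$ (p, a)) * (v p * X $$ (p, a) * u a) = cnj (Tmat N l m $$ (p, a)) * X $$ (p, a) * (v i * u j)"
    proof (cases "Tmat N l m $$ (p, a) = 0")
      case True then show ?thesis by simp
    next
      case F2: False
      have "int a = int p - m" using Tsupp[OF _ _ F2] ap by auto
      then have "v p * u a = v i * u j" using vu[of p a i j] ap ij sij by auto
      then show ?thesis by (simp add: algebra_simps)
    qed
  qed
  also have "\<dots> = frob (Tmat N l m) X * (v i * u j)"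
    using X by (simp add: frob_eq[of _ N] sum_distrib_right)
  finally show ?thesis by simp
qed

lemma lapinv_cj:
  assumes X: "X \<in> carrier_mat N N"
    and vu: "\<And>p q i j. p < N \<Longrightarrow> q < N \<Longrightarrow> i < N \<Longrightarrow> j < N \<Longrightarrow> int q - int p = int j - int i \<Longrightarrow> v p * u q = v i * u j"
  shows "lapinv N (cj N v u X) = cj N v u (lapinv N X)"
proof (rule eq_matI)
  fix i j assume ij: "i < dim_row (cj N v u (lapinv N X))" "j < dim_col (cj N v u (lapinv N X))"
  then have ij': "i < N" "j < N" by auto
  show "lapinv N (cj N v u X) $$ (i, j) = cj N v u (lapinv N X) $$ (i, j)"
  proof -
    have "lapinv N (cj N v u X) $$ (i, j) = (\<Sum>l\<in>{1..N-1}. \<Sum>m\<in>{-int l..int l}.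
      (- complex_of_real (1 / (real l * (real l + 1))) * frob (Tmat N l m) (cj N v u X)) * Tmat N l m $$ (i, j))"
      unfolding lapinv_def using ij' by simp
    also have "\<dots> = (\<Sum>l\<in>{1..N-1}. \<Sum>m\<in>{-int l..int l}.
      v i * ((- complex_of_real (1 / (real l * (real l + 1))) * frob (Tmat N l m) X) * Tmat N l m $$ (i, j)) * u j)"
    proof (intro sum.cong refl)
      fix l m
      show "(- complex_of_real (1 / (real l * (real l + 1))) * frob (Tmat N l m) (cj N v u X)) * Tmat N l m $$ (i, j)
        = v i * ((- complex_of_real (1 / (real l * (real l + 1))) * frob (Tmat N l m) X) * Tmat N l m $$ (i, j)) * u j"
      proof -
        note h = frob_cj_T[where X=X and N=N and i=i and j=j and v=v and u=u and l=l and m=m, OF X ij' vu]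
        define cc where "cc = - complex_of_real (1 / (real l * (real l + 1)))"
        have "cc * frob (Tmat N l m) (cj N v u X) * Tmat N l m $$ (i, j)
           = cc * (frob (Tmat N l m) (cj N v u X) * Tmat N l m $$ (i, j))" by (simp only: mult.assoc)
        also have "\<dots> = cc * (frob (Tmat N l m) X * Tmat N l m $$ (i, j) * (v i * u j))" by (simp only: h)
        also have "\<dots> = v i * (cc * frob (Tmat N l m) X * Tmat N l m $$ (i, j)) * u j" by (simp only: mult_ac)
        finally show ?thesis unfolding cc_def .
      qed
    qed
    also have "\<dots> = cj N v u (lapinv N X) $$ (i, j)"
      unfolding lapinv_def using ij' by (simp add: sum_distrib_left sum_distrib_right)
    finally show ?thesis .
  qed
qed auto

lemma frob_minus:
  assumes "X \<in> carrier_mat N N" "Y \<in> carrier_mat N N"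
  shows "frob (Tmat N l m) (X - Y) = frob (Tmat N l m) X - frob (Tmat N l m) Y"
proof -
  have c: "X - Y \<in> carrier_mat N N" using assms by (auto intro: minus_carrier_mat)
  show ?thesis unfolding frob_eq[OF Tmat_carrier c] frob_eq[OF Tmat_carrier assms(1)] frob_eq[OF Tmat_carrier assms(2)]
    using assms by (simp add: sum_subtractf algebra_simps)
qed

lemma frob_smult:
  "X \<in> carrier_mat N N \<Longrightarrow> frob (Tmat N l m) (a \<cdot>\<^sub>m X) = a * frob (Tmat N l m) X"
  by (simp add: frob_eq[of _ N] sum_distrib_left algebra_simps)

lemma lapinv_minus:
  assumes "X \<in> carrier_mat N N" "Y \<in> carrier_mat N N"
  shows "lapinv N (X - Y) = lapinv N X - lapinv N Y"
proof (rule eq_matI)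
  fix i j assume "i < dim_row (lapinv N X - lapinv N Y)" "j < dim_col (lapinv N X - lapinv N Y)"
  then have ij: "i < N" "j < N" by auto
  have "lapinv N (X - Y) $$ (i, j) = (\<Sum>l\<in>{1..N-1}. \<Sum>m\<in>{-int l..int l}.
      (- complex_of_real (1 / (real l * (real l + 1))) * frob (Tmat N l m) X) * Tmat N l m $$ (i, j)
    - (- complex_of_real (1 / (real l * (real l + 1))) * frob (Tmat N l m) Y) * Tmat N l m $$ (i, j))"
    unfolding lapinv_def using ij assms by (simp add: frob_minus[OF assms] algebra_simps)
  also have "\<dots> = (lapinv N X - lapinv N Y) $$ (i, j)"
    unfolding lapinv_def using ij by (simp add: sum_subtractf sum_negf)
  finally show "lapinv N (X - Y) $$ (i, j) = (lapinv N X - lapinv N Y) $$ (i, j)" .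
qed auto

lemma lapinv_F:
  assumes "2 \<le> N"
  shows "lapinv N (c \<cdot>\<^sub>m Tmat N 1 0) = (- (c / 2)) \<cdot>\<^sub>m Tmat N 1 0"
proof (rule eq_matI)
  fix i j assume ij: "i < dim_row ((- (c / 2)) \<cdot>\<^sub>m Tmat N 1 0)" "j < dim_col ((- (c / 2)) \<cdot>\<^sub>m Tmat N 1 0)"
  then have ij': "i < N" "j < N" by auto
  have "lapinv N (c \<cdot>\<^sub>m Tmat N 1 0) $$ (i, j) = (\<Sum>l\<in>{1..N-1}. \<Sum>m\<in>{-int l..int l}.
      (- complex_of_real (1 / (real l * (real l + 1))) * (c * (if l = 1 \<and> m = 0 then 1 else 0))) * Tmat N l m $$ (i, j))"
    unfolding lapinv_def using ij' assms
  proof (simp only: index_mat(1) ij' prod.case, intro sum.cong refl)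
    fix l m assume l: "l \<in> {1..N-1}" and m: "m \<in> {-int l..int l}"
    have e1: "frob (Tmat N l m) (c \<cdot>\<^sub>m Tmat N 1 0) = c * frob (Tmat N l m) (Tmat N 1 0)"
      by (rule frob_smult) simp
    have e2: "frob (Tmat N l m) (Tmat N 1 0) = (if l = 1 \<and> m = 0 then 1 else 0)"
      by (rule frob_T_T10) (use assms l in auto)
    show "- complex_of_real (1 / (real l * (real l + 1))) * frob (Tmat N l m) (c \<cdot>\<^sub>m Tmat N 1 0) * Tmat N l m $$ (i, j) =
         - complex_of_real (1 / (real l * (real l + 1))) * (c * (if l = 1 \<and> m = 0 then 1 else 0)) * Tmat N l m $$ (i, j)"
      by (simp only: e1 e2)
  qed
  also have "\<dots> = (\<Sum>l\<in>{1..N-1}. if l = 1 then - complex_of_real (1 / 2) * c * Tmat N 1 0 $$ (i, j) else 0)"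
  proof (rule sum.cong[OF refl])
    fix l assume l: "l \<in> {1..N-1}"
    show "(\<Sum>m\<in>{-int l..int l}. (- complex_of_real (1 / (real l * (real l + 1))) * (c * (if l = 1 \<and> m = 0 then 1 else 0))) * Tmat N l m $$ (i, j))
       = (if l = 1 then - complex_of_real (1 / 2) * c * Tmat N 1 0 $$ (i, j) else 0)"
    proof (cases "l = 1")
      case True
      have "(\<Sum>m\<in>{-int l..int l}. (- complex_of_real (1 / (real l * (real l + 1))) * (c * (if l = 1 \<and> m = 0 then 1 else 0))) * Tmat N l m $$ (i, j))
         = (\<Sum>m\<in>{-1..1::int}. if m = 0 then - complex_of_real (1 / 2) * c * Tmat N 1 0 $$ (i, j) else 0)"
      proof (rule sum.cong)
        show "{-int l..int l} = {-1..1::int}" using True by simp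
      next
        fix m :: int assume "m \<in> {-1..1}"
        show "(- complex_of_real (1 / (real l * (real l + 1))) * (c * (if l = 1 \<and> m = 0 then 1 else 0))) * Tmat N l m $$ (i, j)
          = (if m = 0 then - complex_of_real (1 / 2) * c * Tmat N 1 0 $$ (i, j) else 0)"
          unfolding True by (cases "m = 0") simp_all
      qed
      also have "\<dots> = - complex_of_real (1 / 2) * c * Tmat N 1 0 $$ (i, j)"
        by (subst sum.delta) auto
      finally show ?thesis using True by simp
    qed simp
  qed
  also have "\<dots> = - complex_of_real (1 / 2) * c * Tmat N 1 0 $$ (i, j)"
    using assms by (subst sum.delta) auto
  also have "\<dots> = ((- (c / 2)) \<cdot>\<^sub>m Tmat N 1 0) $$ (i, j)" using ij' by simp
  finally show "lapinv N (c \<cdot>\<^sub>m Tmat N 1 0) $$ (i, j) = ((- (c / 2)) \<cdot>\<^sub>m Tmat N 1 0) $$ (i, j)" .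
qed auto



lemma T10_row:
  assumes "2 \<le> N" "i < N" "p < N"
  shows "Tmat N 1 0 $$ (i, p) = (if i = p then Tmat N 1 0 $$ (p, p) else 0)"
  using T10_off[of i N p] assms by auto

lemma hT1:
  assumes "2 \<le> N" "i < N" "j < N"
  shows "(\<Sum>p\<in>{0..<N}. Tmat N 1 0 $$ (i, p) * A $$ (p, j)) = Tmat N 1 0 $$ (i, i) * A $$ (i, j)"
proof -
  have "(\<Sum>p\<in>{0..<N}. Tmat N 1 0 $$ (i, p) * A $$ (p, j))
      = (\<Sum>p\<in>{0..<N}. (if i = p then Tmat N 1 0 $$ (p, p) else 0) * A $$ (p, j))"
  proof (rule sum.cong[OF refl])
    fix p assume "p \<in> {0..<N}"
    then show "Tmat N 1 0 $$ (i, p) * A $$ (p, j) = (if i = p then Tmat N 1 0 $$ (p, p) else 0) * A $$ (p, j)"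
      using T10_row[OF assms(1,2), of p] by simp
  qed
  also have "\<dots> = Tmat N 1 0 $$ (i, i) * A $$ (i, j)"
    by (rule sum_delta_left[where a="\<lambda>p. Tmat N 1 0 $$ (p, p)" and f="\<lambda>p. A $$ (p, j)", OF assms(2)])
  finally show ?thesis .
qed

lemma hT2:
  assumes "2 \<le> N" "i < N" "j < N"
  shows "(\<Sum>p\<in>{0..<N}. A $$ (i, p) * Tmat N 1 0 $$ (p, j)) = A $$ (i, j) * Tmat N 1 0 $$ (j, j)"
proof -
  have "(\<Sum>p\<in>{0..<N}. A $$ (i, p) * Tmat N 1 0 $$ (p, j))
      = (\<Sum>p\<in>{0..<N}. A $$ (i, p) * (if p = j then Tmat N 1 0 $$ (p, p) else 0))"
  proof (rule sum.cong[OF refl])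
    fix p assume "p \<in> {0..<N}"
    then show "A $$ (i, p) * Tmat N 1 0 $$ (p, j) = A $$ (i, p) * (if p = j then Tmat N 1 0 $$ (p, p) else 0)"
      using T10_row[OF assms(1) _ assms(3), of p] by auto
  qed
  also have "\<dots> = A $$ (i, j) * Tmat N 1 0 $$ (j, j)"
    by (rule sum_delta_right[where a="\<lambda>p. Tmat N 1 0 $$ (p, p)" and f="\<lambda>p. A $$ (i, p)", OF assms(3)])
  finally show ?thesis .
qed

lemma cjF:
  assumes "2 \<le> N" "\<And>i. i < N \<Longrightarrow> u i * v i = 1"
  shows "cj N v u (c \<cdot>\<^sub>m Tmat N 1 0) = c \<cdot>\<^sub>m Tmat N 1 0"
proof (rule eq_matI)
  fix i j assume "i < dim_row (c \<cdot>\<^sub>m Tmat N 1 0)" "j < dim_col (c \<cdot>\<^sub>m Tmat N 1 0)"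
  then have ij: "i < N" "j < N" by auto
  show "cj N v u (c \<cdot>\<^sub>m Tmat N 1 0) $$ (i, j) = (c \<cdot>\<^sub>m Tmat N 1 0) $$ (i, j)"
  proof (cases "i = j")
    case True
    have "v j * (c * Tmat N 1 0 $$ (j, j)) * u j = (u j * v j) * (c * Tmat N 1 0 $$ (j, j))"
      by (simp only: mult_ac)
    then show ?thesis using ij True assms(2)[of j] by simp
  next
    case False
    then show ?thesis using ij T10_off[of i N j] by simp
  qed
qed auto

lemma brk_entry:
  assumes "X \<in> carrier_mat N N" "Y \<in> carrier_mat N N" "i < N" "j < N"
  shows "brk N X Y $$ (i, j) = complex_of_real (real N powr (3/2)) *
     ((\<Sum>p\<in>{0..<N}. X $$ (i, p) * Y $$ (p, j)) - (\<Sum>p\<in>{0..<N}. Y $$ (i, p) * X $$ (p, j)))"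
  unfolding brk_def using assms by (simp add: scalar_prod_def)

lemma key_entry:
  assumes N: "2 \<le> N" and W: "W \<in> carrier_mat N N" and ij: "i < N" "j < N"
    and uv: "\<And>i. i < N \<Longrightarrow> u i * v i = 1"
    and vu: "\<And>p q i j. p < N \<Longrightarrow> q < N \<Longrightarrow> i < N \<Longrightarrow> j < N \<Longrightarrow> int q - int p = int j - int i \<Longrightarrow> v p * u q = v i * u j"
  shows "brk N (lapinv N (cj N v u W)) (cj N v u W) $$ (i, j)
    = v i * u j * (brk N (lapinv N (W - c \<cdot>\<^sub>m Tmat N 1 0)) W $$ (i, j)
        + complex_of_real ((1/2) * real N powr (3/2)) * c * (Tmat N 1 0 $$ (j, j) - Tmat N 1 0 $$ (i, i)) * W $$ (i, j))"
proof -
  define T where "T = Tmat N 1 0"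
  define F where "F = c \<cdot>\<^sub>m T"
  define Wc where "Wc = cj N v u W"
  define L where "L = lapinv N Wc"
  define d where "d = - (c / 2)"
  have Fc: "F \<in> carrier_mat N N" unfolding F_def T_def by simp
  have WF: "W - F \<in> carrier_mat N N" using W Fc by (auto intro: minus_carrier_mat)
  have Wcc: "Wc \<in> carrier_mat N N" unfolding Wc_def by simp
  have Lc: "L \<in> carrier_mat N N" unfolding L_def by simp
  have dT: "d \<cdot>\<^sub>m T \<in> carrier_mat N N" unfolding T_def by simp
  have LdT: "L - d \<cdot>\<^sub>m T \<in> carrier_mat N N" using dT by (auto intro: minus_carrier_mat)
  have e: "cj N v u (brk N (lapinv N (W - F)) W) = brk N (L - d \<cdot>\<^sub>m T) Wc"
  proof -
    have "cj N v u (brk N (lapinv N (W - F)) W) = brk N (cj N v u (lapinv N (W - F))) Wc"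
      unfolding Wc_def by (rule cj_brk[OF lapinv_carrier W uv])
    also have "cj N v u (lapinv N (W - F)) = lapinv N (cj N v u (W - F))"
      by (rule lapinv_cj[OF WF vu, symmetric])
    also have "cj N v u (W - F) = Wc - F"
    proof -
      have "cj N v u (W - F) = cj N v u W - cj N v u F" by (rule cj_minus[OF W Fc])
      moreover have "cj N v u F = F" unfolding F_def T_def by (rule cjF[OF N uv])
      ultimately show ?thesis unfolding Wc_def by simp
    qed
    also have "lapinv N (Wc - F) = L - lapinv N F"
      unfolding L_def by (rule lapinv_minus[OF Wcc Fc])
    also have "lapinv N F = d \<cdot>\<^sub>m T"
      unfolding F_def T_def d_def by (rule lapinv_F[OF N])
    finally show ?thesis .
  qed
  define S1 where "S1 = (\<Sum>p\<in>{0..<N}. L $$ (i, p) * Wc $$ (p, j))"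
  define S2 where "S2 = (\<Sum>p\<in>{0..<N}. Wc $$ (i, p) * L $$ (p, j))"
  have b2: "brk N L Wc $$ (i, j) = complex_of_real (real N powr (3/2)) * (S1 - S2)"
    unfolding S1_def S2_def by (rule brk_entry[OF Lc Wcc ij])
  have b1: "brk N (L - d \<cdot>\<^sub>m T) Wc $$ (i, j) = complex_of_real (real N powr (3/2)) *
      ((S1 - d * (T $$ (i, i) * Wc $$ (i, j))) - (S2 - d * (Wc $$ (i, j) * T $$ (j, j))))"
  proof -
    have r1: "(\<Sum>p\<in>{0..<N}. (L - d \<cdot>\<^sub>m T) $$ (i, p) * Wc $$ (p, j)) = S1 - d * (T $$ (i, i) * Wc $$ (i, j))"
    proof -
      have "(\<Sum>p\<in>{0..<N}. (L - d \<cdot>\<^sub>m T) $$ (i, p) * Wc $$ (p, j))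
          = (\<Sum>p\<in>{0..<N}. L $$ (i, p) * Wc $$ (p, j) - d * (T $$ (i, p) * Wc $$ (p, j)))"
        by (rule sum.cong) (use ij Lc in \<open>auto simp: T_def algebra_simps\<close>)
      also have "\<dots> = S1 - d * (\<Sum>p\<in>{0..<N}. T $$ (i, p) * Wc $$ (p, j))"
        unfolding S1_def by (simp add: sum_subtractf sum_distrib_left)
      also have "(\<Sum>p\<in>{0..<N}. T $$ (i, p) * Wc $$ (p, j)) = T $$ (i, i) * Wc $$ (i, j)"
        unfolding T_def by (rule hT1[OF N ij])
      finally show ?thesis .
    qed
    have r2: "(\<Sum>p\<in>{0..<N}. Wc $$ (i, p) * (L - d \<cdot>\<^sub>m T) $$ (p, j)) = S2 - d * (Wc $$ (i, j) * T $$ (j, j))"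
    proof -
      have "(\<Sum>p\<in>{0..<N}. Wc $$ (i, p) * (L - d \<cdot>\<^sub>m T) $$ (p, j))
          = (\<Sum>p\<in>{0..<N}. Wc $$ (i, p) * L $$ (p, j) - d * (Wc $$ (i, p) * T $$ (p, j)))"
        by (rule sum.cong) (use ij Lc in \<open>auto simp: T_def algebra_simps\<close>)
      also have "\<dots> = S2 - d * (\<Sum>p\<in>{0..<N}. Wc $$ (i, p) * T $$ (p, j))"
        unfolding S2_def by (simp add: sum_subtractf sum_distrib_left)
      also have "(\<Sum>p\<in>{0..<N}. Wc $$ (i, p) * T $$ (p, j)) = Wc $$ (i, j) * T $$ (j, j)"
        unfolding T_def by (rule hT2[OF N ij])
      finally show ?thesis .
    qed
    show ?thesis unfolding brk_entry[OF LdT Wcc ij] r1 r2 ..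
  qed
  have lhs: "cj N v u (brk N (lapinv N (W - F)) W) $$ (i, j) = v i * brk N (lapinv N (W - F)) W $$ (i, j) * u j"
    using ij by simp
  have wc: "Wc $$ (i, j) = v i * W $$ (i, j) * u j" unfolding Wc_def using ij by simp
  have main: "v i * brk N (lapinv N (W - F)) W $$ (i, j) * u j = complex_of_real (real N powr (3/2)) *
      ((S1 - d * (T $$ (i, i) * Wc $$ (i, j))) - (S2 - d * (Wc $$ (i, j) * T $$ (j, j))))"
    using e lhs b1 by simp
  have "brk N (lapinv N (cj N v u W)) (cj N v u W) $$ (i, j) = complex_of_real (real N powr (3/2)) * (S1 - S2)"
    using b2 unfolding L_def Wc_def .
  also have "\<dots> = v i * brk N (lapinv N (W - F)) W $$ (i, j) * u j
      + complex_of_real (real N powr (3/2)) * d * (T $$ (i, i) - T $$ (j, j)) * Wc $$ (i, j)"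
    unfolding main by (simp add: algebra_simps)
  also have "\<dots> = v i * u j * (brk N (lapinv N (W - F)) W $$ (i, j)
        + complex_of_real ((1/2) * real N powr (3/2)) * c * (T $$ (j, j) - T $$ (i, i)) * W $$ (i, j))"
    unfolding wc d_def by (simp add: field_simps)
  finally show ?thesis unfolding F_def T_def .
qed



lemma main_gen:
  fixes N :: nat and c :: complex and W :: "real \<Rightarrow> complex mat"
  assumes N: "N \<ge> 2" and cc: "cnj c = - c"
    and sol: "C1_solution N (\<lambda>X. brk N (lapinv N (X - c \<cdot>\<^sub>m Tmat N 1 0)) X) W"
  shows "C1_solution N (\<lambda>X. brk N (lapinv N X) X)
           (\<lambda>t. mexp N (complex_of_real (- (1/2) * real N powr (3/2) * t) \<cdot>\<^sub>m (c \<cdot>\<^sub>m Tmat N 1 0))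
                * W t
                * mexp N (complex_of_real ((1/2) * real N powr (3/2) * t) \<cdot>\<^sub>m (c \<cdot>\<^sub>m Tmat N 1 0)))
       \<and> mexp N (complex_of_real (- (1/2) * real N powr (3/2) * 0) \<cdot>\<^sub>m (c \<cdot>\<^sub>m Tmat N 1 0))
                * W 0
                * mexp N (complex_of_real ((1/2) * real N powr (3/2) * 0) \<cdot>\<^sub>m (c \<cdot>\<^sub>m Tmat N 1 0)) = W 0"
proof -
  from sol obtain W' where
    Wsu: "\<forall>t\<ge>0. W t \<in> su N" and
    W'c: "\<forall>t\<ge>0. W' t \<in> carrier_mat N N" and
    Wd: "\<forall>i<N. \<forall>j<N. \<forall>t\<ge>0. ((\<lambda>s. W s $$ (i, j)) has_vector_derivative (W' t $$ (i, j))) (at t within {0..})" and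
    W'cont: "\<forall>i<N. \<forall>j<N. continuous_on {0..} (\<lambda>t. W' t $$ (i, j))" and
    W'eq: "\<forall>t\<ge>0. W' t = brk N (lapinv N (W t - c \<cdot>\<^sub>m Tmat N 1 0)) (W t)"
    unfolding C1_solution_def by blast
  have Wc: "W t \<in> carrier_mat N N" if "t \<ge> 0" for t using Wsu that unfolding su_def by auto
  define a where "a = (1/2) * real N powr (3/2)"
  define \<tau> where "\<tau> = (\<lambda>i. Tmat N 1 0 $$ (i, i))"
  define v where "v = (\<lambda>t i. exp (complex_of_real (- (1/2) * real N powr (3/2) * t) * (c * \<tau> i)))"
  define u where "u = (\<lambda>t i. exp (complex_of_real ((1/2) * real N powr (3/2) * t) * (c * \<tau> i)))"
  define \<beta> where "\<beta> = (\<lambda>i j. complex_of_real a * c * (\<tau> j - \<tau> i))"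
  have M1: "mexp N (complex_of_real (- (1/2) * real N powr (3/2) * t) \<cdot>\<^sub>m (c \<cdot>\<^sub>m Tmat N 1 0)) = diagm N (v t)" for t
    unfolding smult_T10_diagm[OF N] mexp_diagm v_def \<tau>_def ..
  have M2: "mexp N (complex_of_real ((1/2) * real N powr (3/2) * t) \<cdot>\<^sub>m (c \<cdot>\<^sub>m Tmat N 1 0)) = diagm N (u t)" for t
    unfolding smult_T10_diagm[OF N] mexp_diagm u_def \<tau>_def ..
  have uv1: "u t i * v t i = 1" for t i
    unfolding u_def v_def by (simp add: exp_add[symmetric] algebra_simps)
  have vu_exp: "v t i * u t j = exp (t *\<^sub>R \<beta> i j)" for t i j
    unfolding u_def v_def \<beta>_def a_def by (simp add: exp_add[symmetric] scaleR_conv_of_real algebra_simps diff_divide_distrib)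
  have \<tau>val: "\<tau> i = complex_of_real (kap N * (2 * real i - real (N - 1)))" if "i < N" for i
    unfolding \<tau>_def by (rule T10diag[OF N that])
  have \<beta>aff: "\<beta> p q = \<beta> i j" if "p < N" "q < N" "i < N" "j < N" "int q - int p = int j - int i" for p q i j
  proof -
    have r: "real q - real p = real j - real i"
      using that(5) by (metis of_int_diff of_int_of_nat_eq)
    have "\<tau> q - \<tau> p = complex_of_real (2 * kap N * (real q - real p))"
      unfolding \<tau>val[OF that(2)] \<tau>val[OF that(1)] by (simp add: algebra_simps)
    also have "\<dots> = \<tau> j - \<tau> i"
      unfolding \<tau>val[OF that(4)] \<tau>val[OF that(3)] r by (simp add: algebra_simps)
    finally show ?thesis unfolding \<beta>_def by simp
  qed
  have vu: "v t p * u t q = v t i * u t j" if "p < N" "q < N" "i < N" "j < N" "int q - int p = int j - int i" for t p q i j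
    unfolding vu_exp using \<beta>aff[OF that] by simp
  define Wt where "Wt = (\<lambda>t. mexp N (complex_of_real (- (1/2) * real N powr (3/2) * t) \<cdot>\<^sub>m (c \<cdot>\<^sub>m Tmat N 1 0))
                * W t
                * mexp N (complex_of_real ((1/2) * real N powr (3/2) * t) \<cdot>\<^sub>m (c \<cdot>\<^sub>m Tmat N 1 0)))"
  have Wt_cj: "Wt t = cj N (v t) (u t) (W t)" if "t \<ge> 0" for t
    unfolding Wt_def M1 M2 by (rule diag_cj[OF Wc[OF that]])
  have Wt_entry: "Wt t $$ (i, j) = exp (t *\<^sub>R \<beta> i j) * W t $$ (i, j)" if "t \<ge> 0" "i < N" "j < N" for t i j
    using that Wt_cj[OF that(1)] vu_exp[of t i j] by (simp add: algebra_simps)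
  have \<tau>real: "cnj (\<tau> i) = \<tau> i" if "i < N" for i unfolding \<tau>_def by (rule Tmat_real[OF that that])
  have cnj_v: "cnj (v t i) = u t i" if "i < N" for t i
    unfolding v_def u_def using \<tau>real[OF that] cc by (simp add: exp_cnj)
  have cnj_u: "cnj (u t i) = v t i" if "i < N" for t i
    unfolding v_def u_def using \<tau>real[OF that] cc by (simp add: exp_cnj)
  define Wt' where "Wt' = (\<lambda>t. mat N N (\<lambda>(i, j). exp (t *\<^sub>R \<beta> i j) * (W' t $$ (i, j) + \<beta> i j * W t $$ (i, j))))"
  have part1: "\<forall>t\<ge>0. Wt t \<in> su N"
  proof (intro allI impI)
    fix t :: real assume t: "t \<ge> 0"
    have ct: "ctrans (W t) = - W t" and tr: "mtrace (W t) = 0" using Wsu t unfolding su_def by auto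
    have cW: "cnj (W t $$ (j, i)) = - W t $$ (i, j)" if "i < N" "j < N" for i j
    proof -
      have "ctrans (W t) $$ (i, j) = (- W t) $$ (i, j)" using ct by simp
      then show ?thesis using that Wc[OF t] unfolding ctrans_def by simp
    qed
    have "ctrans (Wt t) = - Wt t"
    proof (rule eq_matI)
      fix i j assume "i < dim_row (- Wt t)" "j < dim_col (- Wt t)"
      then have ij: "i < N" "j < N" unfolding Wt_cj[OF t] by auto
      show "ctrans (Wt t) $$ (i, j) = (- Wt t) $$ (i, j)"
        unfolding Wt_cj[OF t] ctrans_def using ij cW[OF ij] cnj_v cnj_u by (simp add: algebra_simps)
    qed (auto simp: Wt_cj[OF t] ctrans_def)
    moreover have "mtrace (Wt t) = 0"
    proof -
      have "mtrace (Wt t) = (\<Sum>i<N. v t i * W t $$ (i, i) * u t i)"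
        unfolding mtrace_def Wt_cj[OF t] by simp
      also have "\<dots> = (\<Sum>i<N. W t $$ (i, i))"
        by (rule sum.cong) (auto simp: uv1[of t] mult_ac)
      also have "\<dots> = mtrace (W t)" unfolding mtrace_def using Wc[OF t] by simp
      finally show ?thesis using tr by simp
    qed
    ultimately show "Wt t \<in> su N" unfolding su_def Wt_cj[OF t] by simp
  qed
  have Wcont: "continuous_on {0..} (\<lambda>t. W t $$ (i, j))" if "i < N" "j < N" for i j
    by (rule continuous_on_vector_derivative) (use Wd that in auto)
  have part2: "\<forall>i<N. \<forall>j<N. \<forall>t\<ge>0. ((\<lambda>s. Wt s $$ (i, j)) has_vector_derivative (Wt' t $$ (i, j))) (at t within {0..})"
  proof (intro allI impI)
    fix i j :: nat and t :: real assume ij: "i < N" "j < N" and t: "t \<ge> 0"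
    have d1: "((\<lambda>s. exp (s *\<^sub>R \<beta> i j) * W s $$ (i, j)) has_vector_derivative
        (exp (t *\<^sub>R \<beta> i j) * W' t $$ (i, j) + exp (t *\<^sub>R \<beta> i j) * \<beta> i j * W t $$ (i, j))) (at t within {0..})"
      by (rule has_vector_derivative_mult[OF exp_scaleR_has_vector_derivative_right]) (use Wd ij t in auto)
    have d2: "((\<lambda>s. exp (s *\<^sub>R \<beta> i j) * W s $$ (i, j)) has_vector_derivative (Wt' t $$ (i, j))) (at t within {0..})"
      using d1 ij unfolding Wt'_def by (simp add: algebra_simps)
    show "((\<lambda>s. Wt s $$ (i, j)) has_vector_derivative (Wt' t $$ (i, j))) (at t within {0..})"
      by (rule has_vector_derivative_transform_within[OF d2, where d=1]) (use t ij in \<open>auto simp: Wt_entry\<close>)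
  qed
  have part3: "\<forall>i<N. \<forall>j<N. continuous_on {0..} (\<lambda>t. Wt' t $$ (i, j))"
  proof (intro allI impI)
    fix i j :: nat assume ij: "i < N" "j < N"
    have "continuous_on {0..} (\<lambda>t. exp (t *\<^sub>R \<beta> i j) * (W' t $$ (i, j) + \<beta> i j * W t $$ (i, j)))"
      using W'cont Wcont[OF ij] ij by (intro continuous_intros) auto
    then show "continuous_on {0..} (\<lambda>t. Wt' t $$ (i, j))"
      unfolding Wt'_def using ij by simp
  qed
  have part4: "\<forall>t\<ge>0. Wt' t = brk N (lapinv N (Wt t)) (Wt t)"
  proof (intro allI impI)
    fix t :: real assume t: "t \<ge> 0"
    show "Wt' t = brk N (lapinv N (Wt t)) (Wt t)"
    proof (rule eq_matI)
      fix i j assume "i < dim_row (brk N (lapinv N (Wt t)) (Wt t))" "j < dim_col (brk N (lapinv N (Wt t)) (Wt t))"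
      then have ij: "i < N" "j < N" unfolding brk_def Wt_cj[OF t] by auto
      have "brk N (lapinv N (Wt t)) (Wt t) $$ (i, j)
         = v t i * u t j * (brk N (lapinv N (W t - c \<cdot>\<^sub>m Tmat N 1 0)) (W t) $$ (i, j)
        + complex_of_real ((1/2) * real N powr (3/2)) * c * (Tmat N 1 0 $$ (j, j) - Tmat N 1 0 $$ (i, i)) * W t $$ (i, j))"
        unfolding Wt_cj[OF t] by (rule key_entry[OF N Wc[OF t] ij uv1 vu])
      also have "\<dots> = Wt' t $$ (i, j)"
        unfolding Wt'_def vu_exp using ij W'eq t by (simp add: \<beta>_def a_def \<tau>_def)
      finally show "Wt' t $$ (i, j) = brk N (lapinv N (Wt t)) (Wt t) $$ (i, j)" by simp
    qed (auto simp: Wt'_def brk_def Wt_cj[OF t])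
  qed
  have "C1_solution N (\<lambda>X. brk N (lapinv N X) X) Wt"
    unfolding C1_solution_def
  proof (intro conjI exI[of _ Wt'])
    show "\<forall>t\<ge>0. Wt' t \<in> carrier_mat N N" unfolding Wt'_def by simp
  qed (use part1 part2 part3 part4 in auto)
  moreover have "Wt 0 = W 0"
  proof -
    have "Wt 0 = cj N (v 0) (u 0) (W 0)" by (rule Wt_cj) simp
    also have "\<dots> = W 0"
      by (rule eq_matI) (use Wc[of 0] in \<open>auto simp: v_def u_def\<close>)
    finally show ?thesis .
  qed
  ultimately show ?thesis unfolding Wt_def by simp
qed


theorem mainTheorem2:
  fixes N :: nat and \<Omega> :: real and W :: "real \<Rightarrow> complex mat"
  assumes "N \<ge> 2" and "\<Omega> > 0"
    and "C1_solution N (\<lambda>X. brk N (lapinv N (X - (2 * complex_of_real \<Omega> * \<i>) \<cdot>\<^sub>m Tmat N 1 0)) X) W"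
  shows "C1_solution N (\<lambda>X. brk N (lapinv N X) X)
           (\<lambda>t. mexp N (complex_of_real (- (1/2) * real N powr (3/2) * t) \<cdot>\<^sub>m ((2 * complex_of_real \<Omega> * \<i>) \<cdot>\<^sub>m Tmat N 1 0))
                * W t
                * mexp N (complex_of_real ((1/2) * real N powr (3/2) * t) \<cdot>\<^sub>m ((2 * complex_of_real \<Omega> * \<i>) \<cdot>\<^sub>m Tmat N 1 0)))
       \<and> mexp N (complex_of_real (- (1/2) * real N powr (3/2) * 0) \<cdot>\<^sub>m ((2 * complex_of_real \<Omega> * \<i>) \<cdot>\<^sub>m Tmat N 1 0))
                * W 0
                * mexp N (complex_of_real ((1/2) * real N powr (3/2) * 0) \<cdot>\<^sub>m ((2 * complex_of_real \<Omega> * \<i>) \<cdot>\<^sub>m Tmat N 1 0)) = W 0"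
  by (rule main_gen[OF assms(1) _ assms(3)]) simp

end
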